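(* Let $\mathbf{A}\in\mathbb{C}^{n\times n}$ be nonsingular, $\mathbf{b}\in\mathbb{C}^n$ nonzero, and $k\ge1$ such that $\dim\mathcal{K}_{k+1}(\mathbf{A},\mathbf{b})=k+1$. Then \[ \min_{0\leq j\leq k}\|\mathbf{A}^{-1}\mathbf{b}-\mathbf{x}_j^{\mathrm F}\|_2\;\leq\;\sqrt{k+1}\,\cdot\,\kappa(\mathbf{A})\,\cdot\,\|\mathbf{A}^{-1}\mathbf{b}-\mathbf{x}_k^{\mathrm G}\|_2, \] where $\kappa(\mathbf{A})=\|\mathbf{A}\|_2\|\mathbf{A}^{-1}\|_2$.
   Context: The Krylov subspace is $\mathcal{K}_k(\mathbf{A},\mathbf{b})=\operatorname{span}\{\mathbf{b},\mathbf{A}\mathbf{b},\dots,\mathbf{A}^{k-1}\mathbf{b}\}$. The Arnoldi algorithm produces an orthonormal basis $\mathbf{Q}_k=[\mathbf{q}_1,\dots,\mathbf{q}_k]$ of $\mathcal{K}_k(\mathbf{A},\mathbf{b})$ with $\mathbf{q}_1=\mathbf{b}/\|\mathbf{b}\|_2$, and a $(k+1)\times k$ upper Hessenberg matrix $\mathbf{H}_{k+1,k}$ (entries $h_{i,j}$, with $h_{j+1,j}>0$) satisfying $\mathbf{A}\mathbf{Q}_k=\mathbf{Q}_{k+1}\mathbf{H}_{k+1,k}$; $\mathbf{H}_k$ denotes $\mathbf{H}_{k+1,k}$ with its last row deleted. With $\mathbf{e}_1=[1,0,\dots,0]^{\mathsf T}$, the FOM and GMRES iterates (zero initial guess, $\mathbf{x}_0^{\mathrm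 F}=\mathbf{x}_0^{\mathrm G}=\mathbf{0}$) are, for $j\ge1$, $\mathbf{x}_j^{\mathrm F}=\|\mathbf{b}\|_2\mathbf{Q}_j\mathbf{H}_j^{-1}\mathbf{e}_1$ and $\mathbf{x}_j^{\mathrm G}=\|\mathbf{b}\|_2\mathbf{Q}_j\mathbf{H}_{j+1,j}^{\dagger}\mathbf{e}_1$ ($\dagger$ = pseudoinverse); equivalently $\mathbf{x}_j^{\mathrm G}$ minimizes $\|\mathbf{b}-\mathbf{A}\mathbf{x}\|_2$ over $\mathbf{x}\in\mathcal{K}_j(\mathbf{A},\mathbf{b})$. Convention: if $\mathbf{H}_j$ is singular, the FOM iterate $\mathbf{x}_j^{\mathrm F}$ is undefined and its error norm $\|\mathbf{A}^{-1}\mathbf{b}-\mathbf{x}_j^{\mathrm F}\|_2$ is defined to be $+\infty$. *)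

theory Defs
  imports "HOL-Analysis.Analysis"
begin

text \<open>Vectors in C^n are complex^'n (n = CARD('n)); matrices complex^'n^'n.
  The norm on complex^'n is the Euclidean 2-norm.\<close>

definition cinner :: "complex^'n \<Rightarrow> complex^'n \<Rightarrow> complex" where
  "cinner u v = (\<Sum>i\<in>UNIV. cnj (u$i) * v$i)"

definition krylov :: "complex^'n^'n \<Rightarrow> complex^'n \<Rightarrow> nat \<Rightarrow> (complex^'n) set" where
  "krylov A b j = vec.span {(((*v) A) ^^ i) b | i. i < j}"

definition mat_norm2 :: "complex^'n^'n \<Rightarrow> real" where
  "mat_norm2 A = onorm (\<lambda>x. A *v x)"

definition kappa :: "complex^'n^'n \<Rightarrow> real" where
  "kappa A = mat_norm2 A * mat_norm2 (matrix_inv A)"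

text \<open>Arnoldi (Gram-Schmidt) process: arnoldi_list A b j = [q_1, ..., q_(j+1)].\<close>
fun arnoldi_list :: "complex^'n^'n \<Rightarrow> complex^'n \<Rightarrow> nat \<Rightarrow> (complex^'n) list" where
  "arnoldi_list A b 0 = [of_real (1 / norm b) *s b]"
| "arnoldi_list A b (Suc j) =
     (let qs = arnoldi_list A b j;
          w = A *v last qs - (\<Sum>i<length qs. cinner (qs!i) (A *v last qs) *s (qs!i))
      in qs @ [of_real (1 / norm w) *s w])"

text \<open>arnoldi_q A b l is q_(l+1) (0-based index).\<close>
definition arnoldi_q :: "complex^'n^'n \<Rightarrow> complex^'n \<Rightarrow> nat \<Rightarrow> complex^'n" where
  "arnoldi_q A b l = arnoldi_list A b l ! l"

text \<open>Entry h_(i+1,l+1) of the Arnoldi Hessenberg matrix (0-based indices).\<close>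
definition arnoldi_h :: "complex^'n^'n \<Rightarrow> complex^'n \<Rightarrow> nat \<Rightarrow> nat \<Rightarrow> complex" where
  "arnoldi_h A b i l = cinner (arnoldi_q A b i) (A *v arnoldi_q A b l)"

definition H_nonsingular :: "complex^'n^'n \<Rightarrow> complex^'n \<Rightarrow> nat \<Rightarrow> bool" where
  "H_nonsingular A b j \<longleftrightarrow>
     (\<forall>y::nat \<Rightarrow> complex. (\<forall>i<j. (\<Sum>l<j. arnoldi_h A b i l * y l) = 0) \<longrightarrow> (\<forall>l<j. y l = 0))"

definition fom_coeffs :: "complex^'n^'n \<Rightarrow> complex^'n \<Rightarrow> nat \<Rightarrow> nat \<Rightarrow> complex" where
  "fom_coeffs A b j = (THE y. (\<forall>l\<ge>j. y l = 0) \<and>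
      (\<forall>i<j. (\<Sum>l<j. arnoldi_h A b i l * y l) = (if i = 0 then 1 else 0)))"

definition fom_iterate :: "complex^'n^'n \<Rightarrow> complex^'n \<Rightarrow> nat \<Rightarrow> complex^'n" where
  "fom_iterate A b j = of_real (norm b) *s (\<Sum>l<j. fom_coeffs A b j l *s arnoldi_q A b l)"

text \<open>FOM error norm, +infinity when H_j is singular (FOM iterate undefined).\<close>
definition fom_error :: "complex^'n^'n \<Rightarrow> complex^'n \<Rightarrow> nat \<Rightarrow> ereal" where
  "fom_error A b j =
     (if j = 0 then ereal (norm (matrix_inv A *v b))
      else if H_nonsingular A b j then ereal (norm (matrix_inv A *v b - fom_iterate A b j))
      else \<infinity>)"

definition gmres_iterate :: "complex^'n^'n \<Rightarrow> complex^'n \<Rightarrow> nat \<Rightarrow> complex^'n" where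
  "gmres_iterate A b j = (SOME x. x \<in> krylov A b j \<and>
      (\<forall>z\<in>krylov A b j. norm (b - A *v x) \<le> norm (b - A *v z)))"

end

theory Submission
  imports Defs
begin

lemma cinner_add_right: "cinner u (v + w) = cinner u v + cinner u w"
  by (simp add: cinner_def sum.distrib distrib_left)
lemma cinner_add_left: "cinner (u + v) w = cinner u w + cinner v w"
  by (simp add: cinner_def sum.distrib distrib_right)
lemma cinner_diff_right: "cinner u (v - w) = cinner u v - cinner u w"
  by (simp add: cinner_def sum_subtractf right_diff_distrib)
lemma cinner_diff_left: "cinner (u - v) w = cinner u w - cinner v w"
  by (simp add: cinner_def sum_subtractf left_diff_distrib)
lemma cinner_scale_right: "cinner u (c *s v) = c * cinner u v"
  by (simp add: cinner_def sum_distrib_left algebra_simps)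
lemma cinner_scale_left: "cinner (c *s u) v = cnj c * cinner u v"
  by (simp add: cinner_def sum_distrib_left algebra_simps)
lemma cinner_zero_right[simp]: "cinner u 0 = 0"
  by (simp add: cinner_def)
lemma cinner_zero_left[simp]: "cinner 0 u = 0"
  by (simp add: cinner_def)
lemma cinner_sum_right: "cinner u (\<Sum>i\<in>I. f i) = (\<Sum>i\<in>I. cinner u (f i))"
  by (induction I rule: infinite_finite_induct) (auto simp: cinner_add_right)
lemma cinner_commute: "cinner v u = cnj (cinner u v)"
  by (simp add: cinner_def mult.commute)
lemma norm_sq_vec: "(norm (x::complex^'n))^2 = (\<Sum>i\<in>UNIV. (cmod (x$i))^2)"
  unfolding norm_vec_def L2_set_def by (simp add: sum_nonneg)
lemma cinner_self: "cinner x x = of_real ((norm x)^2)"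
  unfolding norm_sq_vec cinner_def of_real_sum
  by (intro sum.cong refl) (metis complex_norm_square mult.commute)
lemma pythag: "cinner u v = 0 \<Longrightarrow> (norm (u + v))^2 = (norm u)^2 + (norm v)^2"
proof -
  assume h: "cinner u v = 0"
  have h2: "cinner v u = 0" using h by (simp add: cinner_commute[of v u])
  have "complex_of_real ((norm (u+v))^2) = cinner (u+v) (u+v)" by (simp add: cinner_self)
  also have "\<dots> = cinner u u + cinner v v" by (simp add: cinner_add_left cinner_add_right h h2)
  also have "\<dots> = complex_of_real ((norm u)^2 + (norm v)^2)" by (simp add: cinner_self)
  finally show ?thesis using of_real_eq_iff by blast
qed
lemma norm_scale: "norm (c *s (x::complex^'n)) = cmod c * norm x"
proof -
  have "(norm (c *s x))^2 = (cmod c * norm x)^2"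
    by (simp add: norm_sq_vec power_mult_distrib norm_mult sum_distrib_left)
  thus ?thesis by (simp add: power2_eq_iff_nonneg)
qed

definition pw :: "complex^'n^'n \<Rightarrow> complex^'n \<Rightarrow> nat \<Rightarrow> complex^'n" where
  "pw A b i = (((*v) A) ^^ i) b"

lemma krylov_eq: "krylov A b j = vec.span (pw A b ` {..<j})"
  unfolding krylov_def pw_def by (intro arg_cong[where f=vec.span]) auto

lemma pw_Suc: "pw A b (Suc i) = A *v pw A b i"
  by (simp add: pw_def)
lemma pw_0: "pw A b 0 = b"
  by (simp add: pw_def)

lemma krylov_0: "krylov A b 0 = {0}"
  by (simp add: krylov_eq)

lemma krylov_Suc: "krylov A b (Suc j) = vec.span (insert (pw A b j) (pw A b ` {..<j}))"
  by (simp add: krylov_eq lessThan_Suc)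

lemma krylov_Suc_iff: "x \<in> krylov A b (Suc j) \<longleftrightarrow> (\<exists>t. x - t *s pw A b j \<in> krylov A b j)"
proof -
  have "krylov A b (Suc j) = vec.span (insert (pw A b j) (pw A b ` {..<j}))" by (rule krylov_Suc)
  moreover have "krylov A b j = vec.span (pw A b ` {..<j})" by (rule krylov_eq)
  ultimately show ?thesis using vec.span_breakdown_eq by simp
qed

lemma krylov_mono: "i \<le> j \<Longrightarrow> krylov A b i \<subseteq> krylov A b j"
  unfolding krylov_eq by (intro vec.span_mono) auto

lemma pw_in: "i < j \<Longrightarrow> pw A b i \<in> krylov A b j"
  unfolding krylov_eq by (intro vec.span_base) auto

lemma b_in: "1 \<le> j \<Longrightarrow> b \<in> krylov A b j"
  using pw_in[of 0 j A b] by (simp add: pw_0)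

lemma krylov_A: "x \<in> krylov A b j \<Longrightarrow> A *v x \<in> krylov A b (Suc j)"
proof -
  assume "x \<in> krylov A b j"
  hence "x \<in> vec.span (pw A b ` {..<j})" by (simp add: krylov_eq)
  thus ?thesis
  proof (induction rule: vec.span_induct_alt)
    case base
    then show ?case by (simp add: vec.span_zero krylov_eq)
  next
    case (step c x y)
    then obtain i where i: "i < j" "x = pw A b i" by auto
    have "A *v (c *s x + y) = c *s (A *v x) + A *v y"
      by (simp add: vec.add vec.scale)
    moreover have "A *v x \<in> krylov A b (Suc j)" using i pw_in[of "Suc i" "Suc j" A b] by (simp add: pw_Suc)
    ultimately show ?case using step.IH
      by (simp add: krylov_eq vec.span_add vec.span_scale)
  qed
qed

lemma krylov_span: "vec.span (krylov A b j) = krylov A b j"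
  by (simp add: krylov_eq vec.span_span)

lemma key_pw:
  assumes dimK: "vec.dim (krylov A b (k+1)) = k+1" and jk: "j \<le> k"
  shows "pw A b j \<notin> krylov A b j"
proof
  assume h: "pw A b j \<in> krylov A b j"
  have sub: "krylov A b (Suc j) \<subseteq> krylov A b j"
  proof
    fix x assume "x \<in> krylov A b (Suc j)"
    then obtain t where "x - t *s pw A b j \<in> krylov A b j" using krylov_Suc_iff by blast
    moreover have "t *s pw A b j \<in> krylov A b j" using h by (simp add: krylov_eq vec.span_scale)
    ultimately show "x \<in> krylov A b j" unfolding krylov_eq by (metis diff_add_cancel vec.span_add)
  qed
  have all: "pw A b (j + m) \<in> krylov A b j" for m
  proof (induction m)
    case 0 then show ?case using h by simp
  next
    case (Suc m)
    have "pw A b (j + Suc m) = A *v pw A b (j+m)" by (simp add: pw_Suc)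
    also have "\<dots> \<in> krylov A b (Suc j)" using krylov_A Suc by blast
    finally show ?case using sub by blast
  qed
  have allp: "pw A b i \<in> krylov A b j" for i
  proof (cases "i < j")
    case True then show ?thesis by (rule pw_in)
  next
    case False then show ?thesis using all[of "i - j"] by simp
  qed
  have "krylov A b (k+1) \<subseteq> krylov A b j"
    unfolding krylov_eq[of A b "k+1"]
    using allp by (metis image_subset_iff krylov_span vec.span_mono)
  hence "vec.dim (krylov A b (k+1)) \<le> vec.dim (krylov A b j)" by (rule vec.dim_subset)
  also have "\<dots> \<le> card (pw A b ` {..<j})"
    by (rule vec.dim_le_card) (auto simp: krylov_eq)
  also have "\<dots> \<le> j" using card_image_le[of "{..<j}" "pw A b"] by simp
  finally show False using dimK jk by simp
qed

lemma sum_delta_mult: "finite I \<Longrightarrow> i \<in> I \<Longrightarrow> (\<Sum>l\<in>I. f l * (if i = l then 1 else 0)) = (f i :: complex)"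
  by (simp add: if_distrib[of "\<lambda>x. f _ * x"] sum.delta cong: if_cong)

lemma proj_span:
  fixes q :: "nat \<Rightarrow> complex^'n"
  assumes orth: "\<forall>i<m. \<forall>l<m. cinner (q i) (q l) = (if i = l then 1 else 0)"
    and v: "v \<in> vec.span (q ` {..<m})"
  shows "v = (\<Sum>i<m. cinner (q i) v *s q i)"
  using v
proof (induction rule: vec.span_induct_alt)
  case base
  then show ?case by simp
next
  case (step c x y)
  then obtain l where l: "l < m" "x = q l" by auto
  have "(\<Sum>i<m. cinner (q i) (c *s x + y) *s q i)
        = (\<Sum>i<m. (c * cinner (q i) x) *s q i) + (\<Sum>i<m. cinner (q i) y *s q i)"
    by (simp add: cinner_add_right cinner_scale_right vec.scale_left_distrib sum.distrib)
  also have "(\<Sum>i<m. (c * cinner (q i) x) *s q i) = c *s x"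
  proof -
    have "(\<Sum>i<m. (c * cinner (q i) x) *s q i) = (\<Sum>i<m. if i = l then c *s q l else 0)"
      using l orth by (intro sum.cong refl) auto
    also have "\<dots> = c *s x" using l by (simp add: sum.delta)
    finally show ?thesis .
  qed
  finally show ?case using step.IH by simp
qed

lemma arnoldi_len: "length (arnoldi_list A b j) = Suc j"
  by (induction j) (simp_all add: Let_def)

lemma arnoldi_nth: "l \<le> j \<Longrightarrow> arnoldi_list A b j ! l = arnoldi_q A b l"
proof (induction j)
  case 0 then show ?case by (simp add: arnoldi_q_def)
next
  case (Suc j)
  show ?case
  proof (cases "l = Suc j")
    case True then show ?thesis by (simp add: arnoldi_q_def)
  next
    case False
    hence "l \<le> j" using Suc.prems by simp
    hence "arnoldi_list A b (Suc j) ! l = arnoldi_list A b j ! l"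
      by (simp add: Let_def nth_append arnoldi_len)
    then show ?thesis using Suc.IH \<open>l \<le> j\<close> by simp
  qed
qed

lemma arnoldi_q0: "arnoldi_q A b 0 = of_real (1 / norm b) *s b"
  by (simp add: arnoldi_q_def)

lemma arnoldi_qSuc: "arnoldi_q A b (Suc j) =
   (let w = A *v arnoldi_q A b j - (\<Sum>i<Suc j. cinner (arnoldi_q A b i) (A *v arnoldi_q A b j) *s arnoldi_q A b i)
    in of_real (1 / norm w) *s w)"
proof -
  have l: "last (arnoldi_list A b j) = arnoldi_q A b j"
    using arnoldi_nth[of j j A b] arnoldi_len[of A b j] by (subst last_conv_nth) auto
  have n: "\<And>i. i < Suc j \<Longrightarrow> arnoldi_list A b j ! i = arnoldi_q A b i"
    using arnoldi_nth by (simp add: less_Suc_eq_le)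
  have s: "(\<Sum>i<length (arnoldi_list A b j). cinner (arnoldi_list A b j ! i) (A *v last (arnoldi_list A b j)) *s arnoldi_list A b j ! i)
     = (\<Sum>i<Suc j. cinner (arnoldi_q A b i) (A *v arnoldi_q A b j) *s arnoldi_q A b i)"
    unfolding arnoldi_len l by (intro sum.cong refl) (simp add: n)
  define W where "W = A *v last (arnoldi_list A b j) - (\<Sum>i<length (arnoldi_list A b j). cinner (arnoldi_list A b j ! i) (A *v last (arnoldi_list A b j)) *s arnoldi_list A b j ! i)"
  have e: "arnoldi_list A b (Suc j) = arnoldi_list A b j @ [of_real (1 / norm W) *s W]"
    by (simp only: arnoldi_list.simps Let_def W_def)
  have "arnoldi_q A b (Suc j) = of_real (1 / norm W) *s W"
    unfolding arnoldi_q_def e using arnoldi_len[of A b j] by (metis nth_append_length)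
  also have "W = A *v arnoldi_q A b j - (\<Sum>i<Suc j. cinner (arnoldi_q A b i) (A *v arnoldi_q A b j) *s arnoldi_q A b i)"
    unfolding W_def s l[symmetric] ..
  finally show ?thesis by (simp only: Let_def)
qed

lemma arnoldi_inv:
  fixes A :: "complex^'n^'n"
  assumes bnz: "b \<noteq> 0" and dimK: "vec.dim (krylov A b (k+1)) = k+1"
  shows "j \<le> k \<Longrightarrow> (\<forall>i\<le>j. \<forall>l\<le>j. cinner (arnoldi_q A b i) (arnoldi_q A b l) = (if i = l then 1 else 0))
           \<and> (\<forall>m\<le>Suc j. vec.span (arnoldi_q A b ` {..<m}) = krylov A b m)"
proof (induction j)
  case 0
  let ?q = "arnoldi_q A b"
  have nb: "norm b \<noteq> 0" using bnz by simp
  have o: "cinner (?q 0) (?q 0) = 1"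
  proof -
    have "norm (?q 0) = 1" using nb by (simp add: arnoldi_q0 norm_scale norm_divide)
    thus ?thesis by (simp add: cinner_self)
  qed
  have s1: "vec.span (?q ` {..<1}) = krylov A b 1"
  proof -
    have "krylov A b 1 = vec.span {b}" by (simp add: krylov_eq pw_0 lessThan_Suc)
    moreover have "vec.span {?q 0} = vec.span {b}"
    proof (subst vec.span_eq, intro conjI)
      show "{?q 0} \<subseteq> vec.span {b}" by (simp add: arnoldi_q0 vec.span_scale vec.span_base)
      have "b = of_real (norm b) *s ?q 0" using nb by (simp add: arnoldi_q0)
      thus "{b} \<subseteq> vec.span {?q 0}" by (metis empty_subsetI insert_subset singletonI vec.span_base vec.span_scale)
    qed
    ultimately show ?thesis by (simp add: lessThan_Suc)
  qed
  have "\<forall>m\<le>Suc 0. vec.span (?q ` {..<m}) = krylov A b m"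
    using s1 by (auto simp: le_Suc_eq krylov_0)
  then show ?case using o by simp
next
  case (Suc j)
  let ?q = "arnoldi_q A b"
  have jk: "j \<le> k" using Suc.prems by simp
  have orth: "\<forall>i\<le>j. \<forall>l\<le>j. cinner (?q i) (?q l) = (if i = l then 1 else 0)"
   and spn: "\<forall>m\<le>Suc j. vec.span (?q ` {..<m}) = krylov A b m" using Suc.IH jk by auto
  have orth': "\<forall>i<Suc j. \<forall>l<Suc j. cinner (?q i) (?q l) = (if i = l then 1 else 0)"
    using orth by (simp add: less_Suc_eq_le)
  define w where "w = A *v ?q j - (\<Sum>i<Suc j. cinner (?q i) (A *v ?q j) *s ?q i)"
  have qS: "?q (Suc j) = of_real (1 / norm w) *s w" by (simp add: arnoldi_qSuc w_def Let_def)
  have wperp: "cinner (?q i) w = 0" if "i \<le> j" for i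
  proof -
    have "cinner (?q i) w = cinner (?q i) (A *v ?q j) - (\<Sum>l<Suc j. cinner (?q l) (A *v ?q j) * cinner (?q i) (?q l))"
      by (simp only: w_def cinner_diff_right cinner_sum_right cinner_scale_right)
    also have "(\<Sum>l<Suc j. cinner (?q l) (A *v ?q j) * cinner (?q i) (?q l)) = cinner (?q i) (A *v ?q j)"
    proof -
      have "(\<Sum>l<Suc j. cinner (?q l) (A *v ?q j) * cinner (?q i) (?q l))
          = (\<Sum>l<Suc j. cinner (?q l) (A *v ?q j) * (if i = l then 1 else 0))"
        using orth that by (intro sum.cong refl) auto
      also have "\<dots> = cinner (?q i) (A *v ?q j)" using that by (intro sum_delta_mult) auto
      finally show ?thesis .
    qed
    finally show ?thesis by simp
  qed
  have qin: "?q i \<in> krylov A b (Suc j)" if "i \<le> j" for i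
    using spn that by (metis (no_types, lifting) le_refl image_eqI lessThan_iff less_Suc_eq_le vec.span_base)
  have Kj: "krylov A b j = vec.span (?q ` {..<j})" using spn by simp
  have KSj: "krylov A b (Suc j) = vec.span (?q ` {..<Suc j})" using spn by simp
  have qj_notin: "?q j \<notin> krylov A b j"
  proof
    assume "?q j \<in> krylov A b j"
    hence "?q j = (\<Sum>i<j. cinner (?q i) (?q j) *s ?q i)"
      using Kj proj_span[of j ?q "?q j"] orth by auto
    also have "\<dots> = 0" using orth by (intro sum.neutral) auto
    finally have "?q j = 0" .
    moreover have "cinner (?q j) (?q j) = 1" using orth by auto
    ultimately show False by simp
  qed
  obtain t where t: "?q j - t *s pw A b j \<in> krylov A b j"
    using qin[of j] krylov_Suc_iff by blast
  have tnz: "t \<noteq> 0" using t qj_notin by auto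
  have At: "A *v ?q j - t *s pw A b (Suc j) \<in> krylov A b (Suc j)"
    using krylov_A[OF t] by (simp add: vec.diff vec.scale pw_Suc)
  have sumin: "(\<Sum>i<Suc j. cinner (?q i) (A *v ?q j) *s ?q i) \<in> krylov A b (Suc j)"
    unfolding krylov_eq by (intro vec.span_sum vec.span_scale) (use qin in \<open>auto simp: krylov_eq less_Suc_eq_le\<close>)
  have wnz: "w \<noteq> 0"
  proof
    assume "w = 0"
    hence "A *v ?q j \<in> krylov A b (Suc j)" using sumin by (simp add: w_def)
    hence "A *v ?q j - (A *v ?q j - t *s pw A b (Suc j)) \<in> krylov A b (Suc j)"
      using At unfolding krylov_eq by (rule vec.span_diff)
    hence "t *s pw A b (Suc j) \<in> krylov A b (Suc j)" by simp
    hence "(1/t) *s (t *s pw A b (Suc j)) \<in> krylov A b (Suc j)"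
      unfolding krylov_eq by (rule vec.span_scale)
    hence "pw A b (Suc j) \<in> krylov A b (Suc j)" using tnz by simp
    thus False using key_pw[OF dimK Suc.prems] by simp
  qed
  have nw: "norm w \<noteq> 0" using wnz by simp
  have o1: "cinner (?q i) (?q (Suc j)) = 0" if "i \<le> j" for i
    using wperp[OF that] by (simp add: qS cinner_scale_right)
  have o2: "cinner (?q (Suc j)) (?q i) = 0" if "i \<le> j" for i
    using o1[OF that] by (simp add: cinner_commute[of "?q (Suc j)"])
  have o3: "cinner (?q (Suc j)) (?q (Suc j)) = 1"
  proof -
    have "norm (?q (Suc j)) = 1" using nw by (simp add: qS norm_scale norm_divide)
    thus ?thesis by (simp add: cinner_self)
  qed
  have orthS: "\<forall>i\<le>Suc j. \<forall>l\<le>Suc j. cinner (?q i) (?q l) = (if i = l then 1 else 0)"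
    using orth o1 o2 o3 by (auto simp: le_Suc_eq)
  have mono: "krylov A b (Suc j) \<subseteq> krylov A b (Suc (Suc j))" by (rule krylov_mono) simp
  have wK: "w \<in> krylov A b (Suc (Suc j))"
  proof -
    have "A *v ?q j \<in> krylov A b (Suc (Suc j))" using krylov_A[OF qin[of j]] by simp
    moreover have "(\<Sum>i<Suc j. cinner (?q i) (A *v ?q j) *s ?q i) \<in> krylov A b (Suc (Suc j))"
      using sumin mono by blast
    ultimately show ?thesis unfolding w_def krylov_eq by (rule vec.span_diff)
  qed
  have sub1: "vec.span (?q ` {..<Suc (Suc j)}) \<subseteq> krylov A b (Suc (Suc j))"
  proof (rule vec.span_minimal)
    show "vec.subspace (krylov A b (Suc (Suc j)))" by (simp add: krylov_eq vec.subspace_span)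
    show "?q ` {..<Suc (Suc j)} \<subseteq> krylov A b (Suc (Suc j))"
    proof
      fix x assume "x \<in> ?q ` {..<Suc (Suc j)}"
      then obtain i where i: "i < Suc (Suc j)" "x = ?q i" by auto
      show "x \<in> krylov A b (Suc (Suc j))"
      proof (cases "i = Suc j")
        case True
        then show ?thesis using i wK by (simp add: qS krylov_eq vec.span_scale)
      next
        case False
        hence "i \<le> j" using i by simp
        then show ?thesis using i qin[of i] mono by blast
      qed
    qed
  qed
  let ?Q = "vec.span (?q ` {..<Suc (Suc j)})"
  have KSj_sub: "krylov A b (Suc j) \<subseteq> ?Q"
    unfolding KSj by (intro vec.span_mono) auto
  have AqQ: "A *v ?q j \<in> ?Q"
  proof -
    have e1: "A *v ?q j = w + (\<Sum>i<Suc j. cinner (?q i) (A *v ?q j) *s ?q i)" unfolding w_def by simp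
    have e2: "of_real (norm w) *s ?q (Suc j) = w"
    proof -
      have "of_real (norm w) *s ?q (Suc j) = (of_real (norm w) * of_real (1 / norm w)) *s w"
        by (simp only: qS vec.scale_scale)
      also have "of_real (norm w) * of_real (1 / norm w) = (1::complex)" using nw by simp
      finally show ?thesis by (simp only: vec.scale_one)
    qed
    have "?q (Suc j) \<in> ?Q" by (intro vec.span_base) auto
    hence "of_real (norm w) *s ?q (Suc j) \<in> ?Q" by (rule vec.span_scale)
    hence wQ: "w \<in> ?Q" by (simp only: e2)
    have sQ: "(\<Sum>i<Suc j. cinner (?q i) (A *v ?q j) *s ?q i) \<in> ?Q" using sumin KSj_sub by blast
    have "w + (\<Sum>i<Suc j. cinner (?q i) (A *v ?q j) *s ?q i) \<in> ?Q" using wQ sQ by (rule vec.span_add)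
    thus ?thesis by (subst e1)
  qed
  have pwQ: "pw A b (Suc j) \<in> ?Q"
  proof -
    have "A *v ?q j - (A *v ?q j - t *s pw A b (Suc j)) \<in> ?Q"
    proof -
      have "A *v ?q j - t *s pw A b (Suc j) \<in> ?Q" using At KSj_sub by blast
      thus ?thesis using AqQ by (rule vec.span_diff[rotated])
    qed
    hence "t *s pw A b (Suc j) \<in> ?Q" by simp
    hence "(1/t) *s (t *s pw A b (Suc j)) \<in> ?Q" by (rule vec.span_scale)
    thus ?thesis using tnz by (simp only: vec.scale_scale) simp
  qed
  have sub2: "krylov A b (Suc (Suc j)) \<subseteq> ?Q"
    unfolding krylov_Suc[of A b "Suc j"]
  proof (rule vec.span_minimal)
    show "vec.subspace ?Q" by (rule vec.subspace_span)
    show "insert (pw A b (Suc j)) (pw A b ` {..<Suc j}) \<subseteq> ?Q"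
      using pwQ pw_in[of _ "Suc j" A b] KSj_sub by auto
  qed
  have "\<forall>m\<le>Suc (Suc j). vec.span (?q ` {..<m}) = krylov A b m"
    using spn sub1 sub2 by (auto simp: le_Suc_eq)
  then show ?case using orthS by simp
qed

lemma cinner_sum_left: "cinner (\<Sum>i\<in>I. f i) u = (\<Sum>i\<in>I. cinner (f i) u)"
  by (induction I rule: infinite_finite_induct) (auto simp: cinner_add_left)

lemma cinner_combo:
  fixes q :: "nat \<Rightarrow> complex^'n"
  assumes orth: "\<forall>i<m. \<forall>l<m. cinner (q i) (q l) = (if i = l then 1 else 0)" and i: "i < m"
  shows "cinner (q i) (\<Sum>l<m. y l *s q l) = y i"
proof -
  have "cinner (q i) (\<Sum>l<m. y l *s q l) = (\<Sum>l<m. y l * (if i = l then 1 else 0))"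
    using orth i by (simp add: cinner_sum_right cinner_scale_right)
  also have "\<dots> = y i" using i by (intro sum_delta_mult) auto
  finally show ?thesis .
qed

context
  fixes A :: "complex^'n^'n" and b :: "complex^'n" and k :: nat
  assumes bnz: "b \<noteq> 0" and dimK: "vec.dim (krylov A b (k+1)) = k+1"
begin

lemma orthK: "i \<le> k \<Longrightarrow> l \<le> k \<Longrightarrow> cinner (arnoldi_q A b i) (arnoldi_q A b l) = (if i = l then 1 else 0)"
  using arnoldi_inv[OF bnz dimK, of k] by auto

lemma orthK': "m \<le> k + 1 \<Longrightarrow> \<forall>i<m. \<forall>l<m. cinner (arnoldi_q A b i) (arnoldi_q A b l) = (if i = l then 1 else 0)"
  using orthK by auto

lemma spanK: "m \<le> k + 1 \<Longrightarrow> vec.span (arnoldi_q A b ` {..<m}) = krylov A b m"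
  using arnoldi_inv[OF bnz dimK, of k] by auto

lemma q_in: "i < m \<Longrightarrow> m \<le> k + 1 \<Longrightarrow> arnoldi_q A b i \<in> krylov A b m"
  using spanK[of m] by (metis image_eqI lessThan_iff vec.span_base)

lemma projK: "m \<le> k + 1 \<Longrightarrow> v \<in> krylov A b m \<Longrightarrow> v = (\<Sum>i<m. cinner (arnoldi_q A b i) v *s arnoldi_q A b i)"
  using proj_span[OF orthK'] spanK by metis

lemma b_eq: "b = of_real (norm b) *s arnoldi_q A b 0"
  using bnz by (simp add: arnoldi_q0)

lemma cinner_q_b: "i \<le> k \<Longrightarrow> cinner (arnoldi_q A b i) b = (if i = 0 then of_real (norm b) else 0)"
  using orthK[of i 0] by (subst b_eq) (simp add: cinner_scale_right)

lemma decomp: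
  assumes j: "j \<le> k" and p: "p \<in> krylov A b (Suc j)"
  shows "p - cinner (arnoldi_q A b j) p *s arnoldi_q A b j \<in> krylov A b j"
    and "(norm p)^2 = (norm (p - cinner (arnoldi_q A b j) p *s arnoldi_q A b j))^2 + (cmod (cinner (arnoldi_q A b j) p))^2"
proof -
  let ?q = "arnoldi_q A b"
  let ?\<beta> = "cinner (?q j) p"
  have "p = (\<Sum>i<Suc j. cinner (?q i) p *s ?q i)" using projK[of "Suc j" p] j p by simp
  also have "\<dots> = (\<Sum>i<j. cinner (?q i) p *s ?q i) + ?\<beta> *s ?q j" by (rule sum.lessThan_Suc)
  finally have h: "p = (\<Sum>i<j. cinner (?q i) p *s ?q i) + ?\<beta> *s ?q j" .
  have e: "p - ?\<beta> *s ?q j = (\<Sum>i<j. cinner (?q i) p *s ?q i)"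
    by (subst h) (rule add_diff_cancel_right')
  show "p - ?\<beta> *s ?q j \<in> krylov A b j"
    unfolding e krylov_eq by (intro vec.span_sum vec.span_scale) (use q_in j in \<open>auto simp: krylov_eq\<close>)
  have o: "cinner (p - ?\<beta> *s ?q j) (?\<beta> *s ?q j) = 0"
    unfolding e using j orthK by (simp add: cinner_sum_left cinner_scale_left cinner_scale_right)
  have nq: "norm (?q j) = 1"
  proof -
    have "complex_of_real ((norm (?q j))^2) = 1" using orthK[OF j j] cinner_self[of "?q j"] by simp
    hence "(norm (?q j))^2 = 1" by (metis of_real_eq_1_iff)
    thus ?thesis using norm_ge_zero[of "?q j"] by (auto simp: power2_eq_1_iff)
  qed
  have "(norm p)^2 = (norm ((p - ?\<beta> *s ?q j) + ?\<beta> *s ?q j))^2" by simp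
  also have "\<dots> = (norm (p - ?\<beta> *s ?q j))^2 + (norm (?\<beta> *s ?q j))^2" by (rule pythag[OF o])
  finally show "(norm p)^2 = (norm (p - ?\<beta> *s ?q j))^2 + (cmod ?\<beta>)^2" by (simp add: norm_scale nq)
qed

lemma slice:
  assumes j: "Suc j \<le> k" and x: "x \<in> krylov A b (Suc j)" and r: "b - A *v x \<in> krylov A b (Suc j)"
  shows "x \<in> krylov A b j"
proof -
  obtain t where t: "x - t *s pw A b j \<in> krylov A b j" using x krylov_Suc_iff by blast
  have At: "A *v x - t *s pw A b (Suc j) \<in> krylov A b (Suc j)"
    using krylov_A[OF t] by (simp add: vec.diff vec.scale pw_Suc)
  have bK: "b \<in> krylov A b (Suc j)" by (rule b_in) simp
  have "b - (b - A *v x) \<in> krylov A b (Suc j)"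
    using bK r unfolding krylov_eq by (rule vec.span_diff)
  hence "A *v x \<in> krylov A b (Suc j)" by (simp only: diff_diff_eq2 add_diff_cancel_left')
  hence "A *v x - (A *v x - t *s pw A b (Suc j)) \<in> krylov A b (Suc j)"
    using At unfolding krylov_eq by (rule vec.span_diff)
  hence "t *s pw A b (Suc j) \<in> krylov A b (Suc j)" by (simp only: diff_diff_eq2 add_diff_cancel_left')
  moreover have "pw A b (Suc j) \<notin> krylov A b (Suc j)" by (rule key_pw[OF dimK j])
  ultimately have "t = 0"
  proof (cases "t = 0")
    case False
    assume h1: "t *s pw A b (Suc j) \<in> krylov A b (Suc j)" and h2: "pw A b (Suc j) \<notin> krylov A b (Suc j)"
    have "(1/t) *s (t *s pw A b (Suc j)) \<in> krylov A b (Suc j)" using h1 unfolding krylov_eq by (rule vec.span_scale)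
    hence "pw A b (Suc j) \<in> krylov A b (Suc j)" using False by simp
    with h2 show ?thesis by simp
  qed simp
  thus ?thesis using t by simp
qed

end

lemma Av_sum: fixes A :: "complex^'n^'n" and m :: nat and q :: "nat \<Rightarrow> complex^'n" and y :: "nat \<Rightarrow> complex"
  shows "A *v (\<Sum>l<m. y l *s q l) = (\<Sum>l<m. y l *s (A *v q l))"
  by (induction m) (simp_all add: matrix_vector_right_distrib vec.scale)

lemma cinner_A_combo: "cinner (arnoldi_q A b i) (A *v (\<Sum>l<m. y l *s arnoldi_q A b l)) = (\<Sum>l<m. arnoldi_h A b i l * y l)"
  by (simp add: Av_sum cinner_sum_right cinner_scale_right arnoldi_h_def mult.commute)

context
  fixes A :: "complex^'n^'n" and b :: "complex^'n" and k :: nat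
  assumes inv: "invertible A" and bnz: "b \<noteq> 0" and dimK: "vec.dim (krylov A b (k+1)) = k+1"
begin

lemma only_last:
  assumes j: "j \<le> k" and u: "u \<in> krylov A b (Suc j)" and perp: "\<forall>i<j. cinner (arnoldi_q A b i) u = 0"
  shows "u = cinner (arnoldi_q A b j) u *s arnoldi_q A b j"
proof -
  have "u = (\<Sum>i<Suc j. cinner (arnoldi_q A b i) u *s arnoldi_q A b i)"
    using projK[OF bnz dimK, of "Suc j" u] j u by simp
  also have "\<dots> = (\<Sum>i<j. cinner (arnoldi_q A b i) u *s arnoldi_q A b i) + cinner (arnoldi_q A b j) u *s arnoldi_q A b j"
    by (rule sum.lessThan_Suc)
  also have "(\<Sum>i<j. cinner (arnoldi_q A b i) u *s arnoldi_q A b i) = 0"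
    using perp by (intro sum.neutral) auto
  finally show ?thesis by simp
qed

lemma singular_case:
  assumes j1: "1 \<le> j" and jk: "j \<le> k" and sing: "\<not> H_nonsingular A b j"
  shows "\<exists>v\<in>krylov A b j. A *v v = arnoldi_q A b j"
proof -
  let ?q = "arnoldi_q A b"
  obtain y l0 where y: "\<forall>i<j. (\<Sum>l<j. arnoldi_h A b i l * y l) = 0" and l0: "l0 < j" "y l0 \<noteq> 0"
    using sing unfolding H_nonsingular_def by blast
  define v where "v = (\<Sum>l<j. y l *s ?q l)"
  have vK: "v \<in> krylov A b j" unfolding v_def krylov_eq
    by (intro vec.span_sum vec.span_scale) (use q_in[OF bnz dimK] jk in \<open>auto simp: krylov_eq\<close>)
  have "cinner (?q l0) v = y l0" unfolding v_def
    by (rule cinner_combo[OF orthK'[OF bnz dimK] l0(1)]) (use jk in simp)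
  hence vnz: "v \<noteq> 0" using l0 by auto
  have AvK: "A *v v \<in> krylov A b (Suc j)" by (rule krylov_A[OF vK])
  have perp: "\<forall>i<j. cinner (?q i) (A *v v) = 0" using y unfolding v_def cinner_A_combo by simp
  define c where "c = cinner (?q j) (A *v v)"
  have Av: "A *v v = c *s ?q j" unfolding c_def by (rule only_last[OF jk AvK perp])
  have "A *v v \<noteq> 0"
  proof
    assume "A *v v = 0"
    hence "A *v v = A *v 0" by simp
    hence "v = 0" by (rule injD[OF inj_matrix_vector_mult[OF inv]])
    thus False using vnz by simp
  qed
  hence cnz: "c \<noteq> 0" using Av by auto
  have "A *v ((1/c) *s v) = ?q j" using cnz by (simp add: vec.scale Av)
  moreover have "(1/c) *s v \<in> krylov A b j" using vK unfolding krylov_eq by (rule vec.span_scale)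
  ultimately show ?thesis by blast
qed

end

context
  fixes A :: "complex^'n^'n" and b :: "complex^'n" and k :: nat
  assumes inv: "invertible A" and bnz: "b \<noteq> 0" and dimK: "vec.dim (krylov A b (k+1)) = k+1"
begin

lemma fom_system_exists:
  assumes j1: "1 \<le> j" and jk: "j \<le> k" and ns: "H_nonsingular A b j"
  shows "\<exists>Y. (\<forall>l\<ge>j. Y l = 0) \<and> (\<forall>i<j. (\<Sum>l<j. arnoldi_h A b i l * Y l) = (if i = 0 then 1 else 0))"
proof -
  let ?q = "arnoldi_q A b"
  define P where "P = (\<lambda>v. \<Sum>i<j. cinner (?q i) v *s ?q i)"
  define T where "T = (\<lambda>v. P (A *v P v) + (v - P v))"
  have orth: "\<forall>i<j. \<forall>l<j. cinner (?q i) (?q l) = (if i = l then 1 else 0)"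
    using orthK'[OF bnz dimK, of j] jk by simp
  have P_add: "P (x + y) = P x + P y" for x y
    by (simp add: P_def cinner_add_right vec.scale_left_distrib sum.distrib)
  have P_scale: "P (c *s x) = c *s P x" for c x
    by (simp add: P_def cinner_scale_right vec.scale_sum_right)
  have P_0: "P 0 = 0" by (simp add: P_def)
  have cP: "cinner (?q i) (P v) = cinner (?q i) v" if "i < j" for i v
    unfolding P_def by (rule cinner_combo[OF orth that])
  have cT: "cinner (?q i) (T v) = cinner (?q i) (A *v P v)" if "i < j" for i v
    by (simp add: T_def cinner_add_right cinner_diff_right cP that)
  have cAP: "cinner (?q i) (A *v P v) = (\<Sum>l<j. arnoldi_h A b i l * cinner (?q l) v)" for i v
    unfolding P_def by (rule cinner_A_combo)
  have lin: "Vector_Spaces.linear (*s) (*s) T"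
    unfolding Vector_Spaces.linear_iff
  proof (intro conjI allI)
    show "vector_space ((*s) :: complex \<Rightarrow> complex^'n \<Rightarrow> complex^'n)" by (rule vec.vector_space_axioms)
    show "vector_space ((*s) :: complex \<Rightarrow> complex^'n \<Rightarrow> complex^'n)" by (rule vec.vector_space_axioms)
    fix x y :: "complex^'n"
    show "T (x + y) = T x + T y"
    proof -
      have g: "\<And>a b c d x y :: complex^'n. (a+b) + ((x+y) - (c+d)) = (a + (x - c)) + (b + (y - d))"
        by (simp add: algebra_simps)
      show ?thesis unfolding T_def P_add matrix_vector_right_distrib by (rule g)
    qed
  next
    fix c :: complex and x :: "complex^'n"
    show "T (c *s x) = c *s T x"
      unfolding T_def P_scale vec.scale vec.scale_right_distrib vec.scale_right_diff_distrib ..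
  qed
  have injT: "inj T"
    unfolding vec.linear_inj_iff_eq_0[OF lin]
  proof (intro allI impI)
    fix v assume Tv: "T v = 0"
    have "\<forall>i<j. (\<Sum>l<j. arnoldi_h A b i l * cinner (?q l) v) = 0"
      using cT[of _ v] cAP[of _ v] Tv by simp
    hence c0: "\<forall>l<j. cinner (?q l) v = 0"
      using ns unfolding H_nonsingular_def by (elim allE[where x="\<lambda>l. cinner (?q l) v"]) simp
    have Pv: "P v = 0" unfolding P_def using c0 by (intro sum.neutral) auto
    show "v = 0" using Tv by (simp add: T_def Pv P_0)
  qed
  have sT: "surj T" by (rule vec.linear_inj_imp_surj[OF lin injT])
  have "b \<in> range T" using sT by simp
  then obtain v where Tv': "b = T v" by (rule rangeE)
  have Tv: "T v = b" using Tv' by simp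
  have sys: "(\<Sum>l<j. arnoldi_h A b i l * cinner (?q l) v) = (if i = 0 then of_real (norm b) else 0)" if "i < j" for i
  proof -
    have "(\<Sum>l<j. arnoldi_h A b i l * cinner (?q l) v) = cinner (?q i) b"
      using cT[OF that, of v] cAP[of i v] Tv by simp
    also have "\<dots> = (if i = 0 then of_real (norm b) else 0)"
      using cinner_q_b[OF bnz dimK, of i] that jk by simp
    finally show ?thesis .
  qed
  define Y where "Y = (\<lambda>l. if l < j then cinner (?q l) v / of_real (norm b) else 0)"
  have nb: "norm b \<noteq> 0" using bnz by simp
  have "(\<Sum>l<j. arnoldi_h A b i l * Y l) = (if i = 0 then 1 else 0)" if "i < j" for i
  proof -
    have "(\<Sum>l<j. arnoldi_h A b i l * Y l) = (\<Sum>l<j. arnoldi_h A b i l * cinner (?q l) v) / of_real (norm b)"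
      unfolding Y_def by (simp add: sum_divide_distrib)
    also have "\<dots> = (if i = 0 then 1 else 0)" using sys[OF that] nb by simp
    finally show ?thesis .
  qed
  moreover have "\<forall>l\<ge>j. Y l = 0" by (simp add: Y_def)
  ultimately show ?thesis by (intro exI[of _ Y]) simp
qed

lemma fom_coeffs_sys:
  assumes j1: "1 \<le> j" and jk: "j \<le> k" and ns: "H_nonsingular A b j"
  shows "\<forall>i<j. (\<Sum>l<j. arnoldi_h A b i l * fom_coeffs A b j l) = (if i = 0 then 1 else 0)"
proof -
  let ?P = "\<lambda>y. (\<forall>l\<ge>j. y l = 0) \<and> (\<forall>i<j. (\<Sum>l<j. arnoldi_h A b i l * y l) = (if i = 0 then 1 else 0))"
  obtain Y where Y: "?P Y" using fom_system_exists[OF j1 jk ns] by (elim exE)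
  have uniq: "Z = Y" if Z: "?P Z" for Z
  proof
    fix l
    have "\<forall>i<j. (\<Sum>l<j. arnoldi_h A b i l * (Z l - Y l)) = 0"
    proof (intro allI impI)
      fix i assume "i < j"
      have "(\<Sum>l<j. arnoldi_h A b i l * (Z l - Y l)) = (\<Sum>l<j. arnoldi_h A b i l * Z l) - (\<Sum>l<j. arnoldi_h A b i l * Y l)"
        by (simp add: right_diff_distrib sum_subtractf)
      thus "(\<Sum>l<j. arnoldi_h A b i l * (Z l - Y l)) = 0" using Z Y \<open>i < j\<close> by simp
    qed
    hence "\<forall>l<j. Z l - Y l = 0"
      using ns unfolding H_nonsingular_def by (elim allE[where x="\<lambda>l. Z l - Y l"]) simp
    hence d: "\<forall>l<j. Z l = Y l" by simp
    have z0: "\<forall>l\<ge>j. Z l = 0" using Z by (rule conjunct1)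
    have y0: "\<forall>l\<ge>j. Y l = 0" using Y by (rule conjunct1)
    show "Z l = Y l"
    proof (cases "l < j")
      case True thus ?thesis using d by blast
    next
      case False thus ?thesis using z0 y0 by (metis not_less)
    qed
  qed
  have "?P (THE y. ?P y)" by (rule theI[of ?P Y, OF Y uniq])
  thus ?thesis unfolding fom_coeffs_def by blast
qed

lemma fom_case:
  assumes j1: "1 \<le> j" and jk: "j \<le> k" and ns: "H_nonsingular A b j"
  shows "fom_iterate A b j \<in> krylov A b j"
    and "\<forall>i<j. cinner (arnoldi_q A b i) (b - A *v fom_iterate A b j) = 0"
proof -
  let ?q = "arnoldi_q A b"
  let ?y = "fom_coeffs A b j"
  have xe: "fom_iterate A b j = of_real (norm b) *s (\<Sum>l<j. ?y l *s ?q l)"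
    by (simp add: fom_iterate_def)
  show "fom_iterate A b j \<in> krylov A b j" unfolding xe krylov_eq
    by (intro vec.span_scale vec.span_sum) (use q_in[OF bnz dimK] jk in \<open>auto simp: krylov_eq\<close>)
  show "\<forall>i<j. cinner (?q i) (b - A *v fom_iterate A b j) = 0"
  proof (intro allI impI)
    fix i assume i: "i < j"
    have "cinner (?q i) (b - A *v fom_iterate A b j)
       = cinner (?q i) b - of_real (norm b) * (\<Sum>l<j. arnoldi_h A b i l * ?y l)"
      unfolding xe by (simp add: cinner_diff_right vec.scale cinner_scale_right cinner_A_combo)
    also have "\<dots> = 0" using fom_coeffs_sys[OF j1 jk ns] i cinner_q_b[OF bnz dimK, of i] jk by simp
    finally show "cinner (?q i) (b - A *v fom_iterate A b j) = 0" .
  qed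
qed

end

lemma matinv:
  fixes A :: "complex^'n^'n"
  assumes "invertible A"
  shows "matrix_inv A *v (A *v x) = x" and "A *v (matrix_inv A *v x) = x"
proof -
  have h: "A ** matrix_inv A = mat 1 \<and> matrix_inv A ** A = mat 1"
    using assms unfolding invertible_def matrix_inv_def by (rule someI_ex)
  show "matrix_inv A *v (A *v x) = x" using h by (simp add: matrix_vector_mul_assoc)
  show "A *v (matrix_inv A *v x) = x" using h by (simp add: matrix_vector_mul_assoc)
qed

lemma bl_mat: "bounded_linear (\<lambda>x. (M::complex^'n^'n) *v x)"
  by (rule matrix_vector_mul_bounded_linear)

lemma mat_norm_bound: "norm ((M::complex^'n^'n) *v x) \<le> mat_norm2 M * norm x"
  unfolding mat_norm2_def using onorm[OF bl_mat] by blast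

lemma mat_norm_nonneg: "0 \<le> mat_norm2 (M::complex^'n^'n)"
  unfolding mat_norm2_def by (rule onorm_pos_le[OF bl_mat])

lemma scaleR_vec_c: "(c::real) *\<^sub>R (x::complex^'n) = of_real c *s x"
  by (simp add: vec_eq_iff of_real_def)

lemma vspan_real_subspace: "subspace (vec.span (S :: (complex^'n) set))"
  unfolding subspace_def
  by (simp add: vec.span_zero vec.span_add scaleR_vec_c vec.span_scale)

lemma gmres_exists:
  fixes A :: "complex^'n^'n"
  shows "gmres_iterate A b j \<in> krylov A b j \<and>
      (\<forall>z\<in>krylov A b j. norm (b - A *v gmres_iterate A b j) \<le> norm (b - A *v z))"
proof -
  let ?K = "krylov A b j"
  have W: "(\<lambda>x. A *v x) ` ?K = vec.span ((\<lambda>x. A *v x) ` (pw A b ` {..<j}))"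
    unfolding krylov_eq by (rule vec.span_image[symmetric])
  have cl: "closed ((\<lambda>x. A *v x) ` ?K)" unfolding W by (rule closed_subspace[OF vspan_real_subspace])
  have ne: "(\<lambda>x. A *v x) ` ?K \<noteq> {}" using vec.span_zero[of "pw A b ` {..<j}"] by (auto simp: krylov_eq)
  obtain w where w: "w \<in> (\<lambda>x. A *v x) ` ?K" "\<And>y. y \<in> (\<lambda>x. A *v x) ` ?K \<Longrightarrow> dist b w \<le> dist b y"
    using distance_attains_inf[OF cl ne] by blast
  then obtain x where x: "x \<in> ?K" "w = A *v x" by blast
  have "x \<in> ?K \<and> (\<forall>z\<in>?K. norm (b - A *v x) \<le> norm (b - A *v z))"
    using x w(2) by (auto simp: dist_norm)
  thus ?thesis unfolding gmres_iterate_def by (rule someI)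
qed

lemma real_ineq0:
  fixes \<alpha> \<sigma> \<phi> z :: real
  assumes "\<phi> > 0" and h: "\<alpha> * \<sigma> + z \<ge> 1" and "\<alpha> \<ge> 0" "\<sigma> \<ge> 0" "z \<ge> 0"
  shows "(\<alpha>^2 + z^2 * \<phi>^2) * (\<sigma>^2 + 1 / \<phi>^2) \<ge> 1"
proof -
  have id: "(\<alpha>^2 + z^2 * \<phi>^2) * (\<sigma>^2 + 1 / \<phi>^2) = (\<alpha> * \<sigma> + z)^2 + (\<alpha> / \<phi> - z * \<phi> * \<sigma>)^2"
    using assms(1) by (simp add: field_simps power2_eq_square)
  have "1 \<le> (\<alpha> * \<sigma> + z)^2" using h by (metis one_le_power)
  also have "\<dots> \<le> (\<alpha> * \<sigma> + z)^2 + (\<alpha> / \<phi> - z * \<phi> * \<sigma>)^2" by simp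
  finally show ?thesis unfolding id .
qed

lemma real_ineq:
  fixes a s F z c :: real
  assumes F: "F > 0" and a: "a \<ge> 0" and s: "s > 0" and z: "z \<ge> 0" and c: "c \<ge> 0"
    and as: "a * s \<ge> c^2" and cz: "c + z \<ge> 1"
  shows "(a + z^2 * F) * (s + 1 / F) \<ge> 1"
proof -
  have "sqrt a * sqrt s \<ge> c"
    using as a s c by (metis real_sqrt_mult real_sqrt_le_iff real_sqrt_abs abs_of_nonneg)
  hence "sqrt a * sqrt s + z \<ge> 1" using cz by linarith
  from real_ineq0[OF real_sqrt_gt_zero[OF F] this] a s z
  show ?thesis using a s F by simp
qed

definition gfom :: "complex^'n^'n \<Rightarrow> complex^'n \<Rightarrow> nat \<Rightarrow> real" where
  "gfom A b i = (if H_nonsingular A b i then 1 / (norm (b - A *v fom_iterate A b i))^2 else 0)"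

lemma gfom_nonneg: "gfom A b i \<ge> 0"
  by (simp add: gfom_def)

lemma fom_iterate_0: "fom_iterate A b 0 = 0"
  by (simp add: fom_iterate_def)

lemma gfom_0: "gfom A b 0 = 1 / (norm b)^2"
  by (simp add: gfom_def H_nonsingular_def fom_iterate_0)

context
  fixes A :: "complex^'n^'n" and b :: "complex^'n" and k :: nat
  assumes inv: "invertible A" and bnz: "b \<noteq> 0" and dimK: "vec.dim (krylov A b (k+1)) = k+1"
begin

lemma S_pos: "(\<Sum>i\<le>j. gfom A b i) > 0"
proof -
  have "0 < gfom A b 0" using bnz by (simp add: gfom_0)
  also have "\<dots> \<le> (\<Sum>i\<le>j. gfom A b i)"
    by (rule member_le_sum) (auto simp: gfom_nonneg)
  finally show ?thesis .
qed

lemma res_in: "x \<in> krylov A b j \<Longrightarrow> b - A *v x \<in> krylov A b (Suc j)"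
  using b_in[of "Suc j" b A] krylov_A[of x A b j] unfolding krylov_eq by (intro vec.span_diff) auto

lemma main_ind:
  "j \<le> k \<Longrightarrow> \<forall>x\<in>krylov A b j. (norm (b - A *v x))^2 * (\<Sum>i\<le>j. gfom A b i) \<ge> 1"
proof (induction j)
  case 0
  show ?case using bnz by (simp add: krylov_0 gfom_0)
next
  case (Suc j)
  let ?q = "arnoldi_q A b"
  let ?S = "\<Sum>i\<le>j. gfom A b i"
  have jk: "Suc j \<le> k" using Suc.prems .
  have IH: "\<And>x. x \<in> krylov A b j \<Longrightarrow> (norm (b - A *v x))^2 * ?S \<ge> 1" using Suc.IH jk by auto
  have Spos: "?S > 0" by (rule S_pos)
  show ?case
  proof
    fix x assume x: "x \<in> krylov A b (Suc j)"
    define p where "p = b - A *v x"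
    have pK: "p \<in> krylov A b (Suc (Suc j))" unfolding p_def by (rule res_in[OF x])
    define \<beta> where "\<beta> = cinner (?q (Suc j)) p"
    define p' where "p' = p - \<beta> *s ?q (Suc j)"
    have p'K: "p' \<in> krylov A b (Suc j)" unfolding p'_def \<beta>_def by (rule decomp(1)[OF bnz dimK jk pK])
    have pn: "(norm p)^2 = (norm p')^2 + (cmod \<beta>)^2" unfolding p'_def \<beta>_def by (rule decomp(2)[OF bnz dimK jk pK])
    have SS: "(\<Sum>i\<le>Suc j. gfom A b i) = ?S + gfom A b (Suc j)" by simp
    show "(norm (b - A *v x))^2 * (\<Sum>i\<le>Suc j. gfom A b i) \<ge> 1"
    proof (cases "H_nonsingular A b (Suc j)")
      case False
      obtain v where v: "v \<in> krylov A b (Suc j)" "A *v v = ?q (Suc j)"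
        using singular_case[OF inv bnz dimK _ jk False] by auto
      have e: "p' = b - A *v (x + \<beta> *s v)"
        unfolding p'_def p_def by (simp add: matrix_vector_right_distrib vec.scale v(2) algebra_simps)
      have xv: "x + \<beta> *s v \<in> krylov A b (Suc j)" using x v(1) unfolding krylov_eq by (intro vec.span_add vec.span_scale)
      have "x + \<beta> *s v \<in> krylov A b j" by (rule slice[OF bnz dimK jk xv]) (use p'K e in simp)
      hence "(norm p')^2 * ?S \<ge> 1" using IH e by simp
      moreover have "(norm p')^2 \<le> (norm p)^2" using pn by simp
      ultimately have "(norm p)^2 * ?S \<ge> 1" using Spos by (meson dual_order.trans mult_right_mono less_imp_le)
      thus ?thesis using False by (simp add: SS gfom_def p_def)
    next
      case True
      define xF where "xF = fom_iterate A b (Suc j)"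
      define f where "f = b - A *v xF"
      have xFK: "xF \<in> krylov A b (Suc j)" unfolding xF_def by (rule fom_case(1)[OF inv bnz dimK _ jk True]) simp
      have fperp: "\<forall>i<Suc j. cinner (?q i) f = 0" unfolding f_def xF_def by (rule fom_case(2)[OF inv bnz dimK _ jk True]) simp
      have fK: "f \<in> krylov A b (Suc (Suc j))" unfolding f_def by (rule res_in[OF xFK])
      define \<phi> where "\<phi> = cinner (?q (Suc j)) f"
      have fe: "f = \<phi> *s ?q (Suc j)" unfolding \<phi>_def by (rule only_last[OF inv bnz dimK jk fK fperp])
      have nq: "norm (?q (Suc j)) = 1"
      proof -
        have "complex_of_real ((norm (?q (Suc j)))^2) = 1" using orthK[OF bnz dimK jk jk] cinner_self[of "?q (Suc j)"] by simp
        hence "(norm (?q (Suc j)))^2 = 1" by (metis of_real_eq_1_iff)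
        thus ?thesis using norm_ge_zero[of "?q (Suc j)"] by (auto simp: power2_eq_1_iff)
      qed
      have nf: "norm f = cmod \<phi>" using fe nq by (simp add: norm_scale)
      have phinz: "\<phi> \<noteq> 0"
      proof
        assume "\<phi> = 0"
        hence f0: "f = 0" using fe by simp
        have "xF \<in> krylov A b j" by (rule slice[OF bnz dimK jk xFK]) (use f0 f_def vec.span_zero in \<open>simp add: krylov_eq\<close>)
        hence "(norm f)^2 * ?S \<ge> 1" using IH f_def by simp
        thus False using f0 by simp
      qed
      define u where "u = \<beta> / \<phi>"
      have bu: "\<beta> = u * \<phi>" using phinz by (simp add: u_def)
      have p'e: "p' = p - u *s f" unfolding p'_def fe by (simp add: bu vec.scale_scale)
      have key: "(norm p')^2 * ?S \<ge> (cmod (1 - u))^2"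
      proof (cases "u = 1")
        case True then show ?thesis using Spos by simp
      next
        case False
        hence u1: "1 - u \<noteq> 0" by simp
        define z where "z = (1 / (1 - u)) *s (x - u *s xF)"
        have ze: "b - A *v z = (1 / (1 - u)) *s p'"
        proof -
          have "(1 / (1 - u)) *s p' = (1 / (1 - u)) *s ((1 - u) *s b - A *v (x - u *s xF))"
            unfolding p'e p_def f_def by (simp add: vec.diff vec.scale algebra_simps)
          also have "\<dots> = ((1 / (1 - u)) * (1 - u)) *s b - (1 / (1 - u)) *s (A *v (x - u *s xF))"
            by (simp only: vec.scale_right_diff_distrib vec.scale_scale)
          also have "(1 / (1 - u)) * (1 - u) = 1" using u1 by simp
          also have "(1 / (1 - u)) *s (A *v (x - u *s xF)) = A *v z"
            by (simp only: z_def vec.scale)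
          finally have "(1 / (1 - u)) *s p' = 1 *s b - A *v z" .
          thus ?thesis by simp
        qed
        have zK: "z \<in> krylov A b (Suc j)" unfolding z_def using x xFK unfolding krylov_eq
          by (intro vec.span_scale vec.span_diff)
        have "b - A *v z \<in> krylov A b (Suc j)" unfolding ze using p'K unfolding krylov_eq by (rule vec.span_scale)
        hence "z \<in> krylov A b j" by (rule slice[OF bnz dimK jk zK])
        hence "(norm (b - A *v z))^2 * ?S \<ge> 1" by (rule IH)
        hence "(cmod (1 / (1 - u)))^2 * (norm p')^2 * ?S \<ge> 1" unfolding ze norm_scale by (simp add: power_mult_distrib)
        hence "(norm p')^2 * ?S \<ge> (cmod (1 - u))^2" using u1
          by (simp add: norm_divide power_divide field_simps)
        thus ?thesis .
      qed
      have g: "gfom A b (Suc j) = 1 / (cmod \<phi>)^2" using True by (simp add: gfom_def nf[symmetric] f_def xF_def)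
      have tri: "cmod (1 - u) + cmod u \<ge> 1" using norm_triangle_ineq[of "1 - u" u] by simp
      have "(norm p)^2 = (norm p')^2 + (cmod u)^2 * (cmod \<phi>)^2" using pn bu by (simp add: norm_mult power_mult_distrib)
      moreover have "((norm p')^2 + (cmod u)^2 * (cmod \<phi>)^2) * (?S + 1 / (cmod \<phi>)^2) \<ge> 1"
        by (rule real_ineq[OF _ _ Spos _ _ key tri]) (use phinz in auto)
      ultimately show ?thesis by (simp add: SS g p_def)
    qed
  qed
qed

end

theorem mainTheorem4:
  fixes A :: "complex^'n^'n" and b :: "complex^'n" and k :: nat
  assumes "invertible A"
    and "b \<noteq> 0"
    and "k \<ge> 1"
    and "vec.dim (krylov A b (k + 1)) = k + 1"
  shows "Min (fom_error A b ` {0..k})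
           \<le> ereal (sqrt (real (k + 1)) * kappa A * norm (matrix_inv A *v b - gmres_iterate A b k))"
proof -
  note inv = assms(1) and bnz = assms(2) and dimK = assms(4)
  define xG where "xG = gmres_iterate A b k"
  define r where "r = b - A *v xG"
  define e where "e = matrix_inv A *v b - xG"
  define N where "N = mat_norm2 A"
  define N' where "N' = mat_norm2 (matrix_inv A)"
  have xGK: "xG \<in> krylov A b k" unfolding xG_def using gmres_exists by blast
  have ind: "(norm r)^2 * (\<Sum>i\<le>k. gfom A b i) \<ge> 1"
    using main_ind[OF inv bnz dimK, of k] xGK unfolding r_def by blast
  define M where "M = Max (gfom A b ` {..k})"
  have "M \<in> gfom A b ` {..k}" unfolding M_def by (rule Max_in) auto
  then obtain j0 where j0: "j0 \<le> k" "gfom A b j0 = M" by auto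
  have "(\<Sum>i\<le>k. gfom A b i) \<le> of_nat (card {..k}) * M"
    by (rule sum_bounded_above) (auto simp: M_def)
  hence Sle: "(\<Sum>i\<le>k. gfom A b i) \<le> real (k+1) * gfom A b j0" using j0 by simp
  have rpos: "(norm r)^2 \<ge> 0" by simp
  have one: "(norm r)^2 * (real (k+1) * gfom A b j0) \<ge> 1"
    using ind mult_left_mono[OF Sle rpos] by linarith
  have gpos: "gfom A b j0 > 0"
  proof (rule ccontr)
    assume "\<not> gfom A b j0 > 0"
    hence "gfom A b j0 = 0" using gfom_nonneg[of A b j0] by linarith
    thus False using one by simp
  qed
  define f0 where "f0 = b - A *v fom_iterate A b j0"
  have ns: "H_nonsingular A b j0" using gpos by (auto simp: gfom_def split: if_splits)
  have g0: "gfom A b j0 = 1 / (norm f0)^2" using ns by (simp add: gfom_def f0_def)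
  have f0nz: "norm f0 > 0" using gpos g0 by (cases "norm f0 = 0") auto
  have "(norm r)^2 * real (k+1) \<ge> (norm f0)^2"
    using one f0nz unfolding g0 by (simp add: field_simps)
  hence "(norm f0)^2 \<le> (sqrt (real (k+1)) * norm r)^2" by (simp add: power_mult_distrib mult.commute)
  hence f0le: "norm f0 \<le> sqrt (real (k+1)) * norm r"
    by (rule power2_le_imp_le) simp
  have ferr: "fom_error A b j0 = ereal (norm (matrix_inv A *v b - fom_iterate A b j0))"
    using ns by (cases "j0 = 0") (simp_all add: fom_error_def fom_iterate_0)
  have "matrix_inv A *v b - fom_iterate A b j0 = matrix_inv A *v f0"
    unfolding f0_def by (simp add: vec.diff matinv[OF inv])
  hence "norm (matrix_inv A *v b - fom_iterate A b j0) \<le> N' * norm f0"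
    unfolding N'_def by (simp add: mat_norm_bound)
  also have "\<dots> \<le> N' * (sqrt (real (k+1)) * norm r)"
    using f0le mat_norm_nonneg unfolding N'_def by (rule mult_left_mono)
  also have "r = A *v e" unfolding r_def e_def by (simp add: vec.diff matinv[OF inv])
  also have "N' * (sqrt (real (k+1)) * norm (A *v e)) \<le> N' * (sqrt (real (k+1)) * (N * norm e))"
    using mat_norm_bound[of A e] mat_norm_nonneg[of "matrix_inv A"]
    unfolding N_def N'_def by (intro mult_left_mono) auto
  also have "\<dots> = sqrt (real (k + 1)) * kappa A * norm (matrix_inv A *v b - gmres_iterate A b k)"
    by (simp add: kappa_def N_def N'_def e_def xG_def)
  finally have le: "fom_error A b j0 \<le> ereal (sqrt (real (k + 1)) * kappa A * norm (matrix_inv A *v b - gmres_iterate A b k))"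
    unfolding ferr by simp
  have "Min (fom_error A b ` {0..k}) \<le> fom_error A b j0"
    by (rule Min_le) (use j0 in auto)
  thus ?thesis using le by (rule order.trans)
qed

end
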